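(* Let $n,p,n_\xi\ge 1$ be integers, let $f_1,\dots,f_n:\mathbb{R}^p\to\mathbb{R}$ be continuously differentiable, and let $g=\frac1n\sum_{i=1}^n f_i$. Suppose there exists a unique $x^*\in\mathbb{R}^p$ with $\nabla g(x^* )=0$. Let $\tilde A_i\in\mathbb{R}^{n_\xi\times n_\xi}$, $\tilde B_i\in\mathbb{R}^{n_\xi\times n}$ ($i=1,\dots,n$) and $\tilde C\in\mathbb{R}^{1\times n_\xi}$, and set $A_i=\tilde A_i\otimes I_p$, $B_i=\tilde B_i\otimes I_p$, $C=\tilde C\otimes I_p$. Consider the jump system $$\xi^{k+1}=A_{i_k}\xi^k+B_{i_k}w^k,\qquad v^k=C\xi^k,\qquad w^k=\begin{bmatrix}\nabla f_1(v^k)\\ \vdots\\ \nabla f_n(v^k)\end{bmatrix},$$ where the indices $i_k$ are sampled IID from the uniform distribution on $\{1,\dots,n\}$. Let $w^*=\begin{bmatrix}\nabla f_1(x^* )^T&\cdots&\nabla f_n(x^* )^T\end{bmatrix}^T$ and let $\xi^*\in\mathbb{R}^{n_\xi p}$ satisfy $\xi^*=A_i\xi^*+B_iw^*$ for all $i\in\{1,\dots,n\}$ and $C\xi^*=x^*$. Assume that for some prescribed scalars $\nu,\gamma$ and $L$, for all $x\in\mathbb{R}^p$ and all $i$, $$\begin{bmatrix} x-x^*\\ \frac1n\sum_{j=1}^n\nabla f_j(x)-\frac1n\sum_{j=1}^n\nabla f_j(x^* )\end{bmatrix}^T\begin{bmatrix}2L\nu I_p&(L-\nu)I_p\\(L-\nu)I_p&-2I_p\end{bmatrix}\begin{bmatrix}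 x-x^*\\ \frac1n\sum_{j=1}^n\nabla f_j(x)-\frac1n\sum_{j=1}^n\nabla f_j(x^* )\end{bmatrix}\ge0,$$ $$\begin{bmatrix} x-x^*\\ \nabla f_i(x)-\nabla f_i(x^* )\end{bmatrix}^T\begin{bmatrix}2L\gamma I_p&(L-\gamma)I_p\\(L-\gamma)I_p&-2I_p\end{bmatrix}\begin{bmatrix} x-x^*\\ \nabla f_i(x)-\nabla f_i(x^* )\end{bmatrix}\ge0.$$ Define $\tilde D_{\psi1}=\begin{bmatrix}L&\nu&L&\gamma&\cdots&L&\gamma\end{bmatrix}^T\in\mathbb{R}^{2n+2}$ (the pair $L,\gamma$ repeated $n$ times) and $\tilde D_{\psi2}=\begin{bmatrix}-\frac1n e&\frac1n e&-e_1&e_1&\cdots&-e_n&e_n\end{bmatrix}^T\in\mathbb{R}^{(2n+2)\times n}$. If, for a given scalar $\rho$, there exist a symmetric matrix $\tilde P\in\mathbb{R}^{n_\xi\times n_\xi}$ with $\tilde P>0$ and nonnegative scalars $\lambda_1,\lambda_2$ such that $$\begin{bmatrix}\frac1n\sum_{i=1}^n\tilde A_i^T\tilde P\tilde A_i-\rho^2\tilde P&\frac1n\sum_{i=1}^n\tilde A_i^T\tilde P\tilde B_i\\ \frac1n\sum_{i=1}^n\tilde B_i^T\tilde P\tilde A_i&\frac1n\sum_{i=1}^n\tilde B_i^T\tilde P\tilde B_i\end{bmatrix}+\begin{bmatrix}\tilde C^T\tilde D_{\psi1}^T\\ \tilde D_{\psi2}^T\end{bmatrix}\left(\begin{bmatrix}\lambda_1&\tilde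 0^T\\ \tilde 0&\frac{\lambda_2}{n}I_n\end{bmatrix}\otimes\begin{bmatrix}0&1\\1&0\end{bmatrix}\right)\begin{bmatrix}\tilde D_{\psi1}\tilde C&\tilde D_{\psi2}\end{bmatrix}\le0,$$ then for all $k\ge1$ and all $\xi^0\in\mathbb{R}^{n_\xi p}$, $$\mathbb{E}\left[(\xi^{k+1}-\xi^* )^T(\tilde P\otimes I_p)(\xi^{k+1}-\xi^* )\right]\le\rho^2\,\mathbb{E}\left[(\xi^{k}-\xi^* )^T(\tilde P\otimes I_p)(\xi^{k}-\xi^* )\right],$$ and consequently $\mathbb{E}\|\xi^k-\xi^*\|^2\le\rho^{2k}\,\mathrm{cond}(\tilde P)\,\|\xi^0-\xi^*\|^2$ for all $k\ge1$.
   Context: $e_i$ is the $i$-th standard basis vector of $\mathbb{R}^n$, $e\in\mathbb{R}^n$ is the all-ones vector, $\tilde 0\in\mathbb{R}^n$ is the zero vector, $\otimes$ is the Kronecker product, and $M\le0$ means negative semidefinite. $\mathrm{cond}(\tilde P)$ is the condition number (ratio of largest to smallest eigenvalue) of the positive definite matrix $\tilde P$. Expectation is over the random indices $i_k$. *)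

theory Defs
  imports "HOL-Analysis.Analysis" "HOL-Probability.Probability"
begin

text \<open>Small (scalar) matrices are represented as functions nat => nat => real;
  their dimensions are passed explicitly, entries outside the range are irrelevant.
  Indices are 0-based: the paper's i in {1..n} is our i in {0..<n}.\<close>

type_synonym rmat = "nat \<Rightarrow> nat \<Rightarrow> real"

definition mmul :: "nat \<Rightarrow> rmat \<Rightarrow> rmat \<Rightarrow> rmat" where
  "mmul m A B = (\<lambda>i j. \<Sum>k<m. A i k * B k j)"

definition tr :: "rmat \<Rightarrow> rmat" where
  "tr A = (\<lambda>i j. A j i)"

definition block4 :: "nat \<Rightarrow> nat \<Rightarrow> rmat \<Rightarrow> rmat \<Rightarrow> rmat \<Rightarrow> rmat \<Rightarrow> rmat" where
  "block4 r c A B C D = (\<lambda>i j. if i < r then (if j < c then A i j else B i (j - c))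
                                        else (if j < c then C (i - r) j else D (i - r) (j - c)))"

definition hcat :: "nat \<Rightarrow> rmat \<Rightarrow> rmat \<Rightarrow> rmat" where
  "hcat c A B = (\<lambda>i j. if j < c then A i j else B i (j - c))"

definition kron :: "nat \<Rightarrow> nat \<Rightarrow> rmat \<Rightarrow> rmat \<Rightarrow> rmat" where
  "kron rb cb A B = (\<lambda>i j. A (i div rb) (j div cb) * B (i mod rb) (j mod cb))"

definition idm :: "nat \<Rightarrow> rmat" where
  "idm d = (\<lambda>i j. if i = j \<and> i < d then 1 else 0)"

definition zerom :: rmat where "zerom = (\<lambda>i j. 0)"

definition quad :: "nat \<Rightarrow> rmat \<Rightarrow> (nat \<Rightarrow> real) \<Rightarrow> real" where
  "quad d M v = (\<Sum>i<d. \<Sum>j<d. v i * M i j * v j)"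

definition nsd :: "nat \<Rightarrow> rmat \<Rightarrow> bool" where
  "nsd d M \<longleftrightarrow> (\<forall>v. quad d M v \<le> 0)"

definition pdef :: "nat \<Rightarrow> rmat \<Rightarrow> bool" where
  "pdef d M \<longleftrightarrow> (\<forall>v. (\<exists>i<d. v i \<noteq> 0) \<longrightarrow> quad d M v > 0)"

definition symm :: "nat \<Rightarrow> rmat \<Rightarrow> bool" where
  "symm d M \<longleftrightarrow> (\<forall>i<d. \<forall>j<d. M i j = M j i)"

definition eigval :: "nat \<Rightarrow> rmat \<Rightarrow> real \<Rightarrow> bool" where
  "eigval d M l \<longleftrightarrow> (\<exists>v. (\<exists>i<d. v i \<noteq> 0) \<and> (\<forall>i<d. (\<Sum>j<d. M i j * v j) = l * v i))"

definition cond :: "nat \<Rightarrow> rmat \<Rightarrow> real" where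
  "cond d M = Max {l. eigval d M l} / Min {l. eigval d M l}"

text \<open>Vectors in R^(n_xi p) are block vectors xi :: nat => real^'p (blocks 0..<n_xi).
  (A (x) I_p) xi has block a equal to sum_b A a b *R xi b.\<close>

definition kmv :: "nat \<Rightarrow> rmat \<Rightarrow> (nat \<Rightarrow> 'v::real_vector) \<Rightarrow> (nat \<Rightarrow> 'v)" where
  "kmv m A x = (\<lambda>a. \<Sum>b<m. A a b *\<^sub>R x b)"

definition kquad :: "nat \<Rightarrow> rmat \<Rightarrow> (nat \<Rightarrow> 'v::real_inner) \<Rightarrow> real" where
  "kquad m P x = (\<Sum>a<m. \<Sum>b<m. P a b * (x a \<bullet> x b))"   \<comment> \<open>x^T (P (x) I_p) x\<close>

definition bnorm2 :: "nat \<Rightarrow> (nat \<Rightarrow> 'v::real_normed_vector) \<Rightarrow> real" where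
  "bnorm2 m x = (\<Sum>a<m. (norm (x a))^2)"

primrec traj :: "nat \<Rightarrow> nat \<Rightarrow> (nat \<Rightarrow> rmat) \<Rightarrow> (nat \<Rightarrow> rmat) \<Rightarrow> rmat
                  \<Rightarrow> (nat \<Rightarrow> 'v::real_vector \<Rightarrow> 'v) \<Rightarrow> (nat \<Rightarrow> 'v) \<Rightarrow> (nat \<Rightarrow> nat) \<Rightarrow> nat \<Rightarrow> (nat \<Rightarrow> 'v)" where
  "traj nxi n At Bt Ct G xi0 \<sigma> 0 = xi0"
| "traj nxi n At Bt Ct G xi0 \<sigma> (Suc k) =
     (let xi = traj nxi n At Bt Ct G xi0 \<sigma> k;
          v = kmv nxi Ct xi 0;
          w = (\<lambda>j. G j v)
      in (\<lambda>a. kmv nxi (At (\<sigma> k)) xi a + kmv n (Bt (\<sigma> k)) w a))"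

definition Eidx :: "nat \<Rightarrow> nat \<Rightarrow> ((nat \<Rightarrow> nat) \<Rightarrow> real) \<Rightarrow> real" where
  "Eidx n K h = measure_pmf.expectation (Pi_pmf {..<K} 0 (\<lambda>_. pmf_of_set {..<n})) h"

definition Dpsi1 :: "real \<Rightarrow> real \<Rightarrow> real \<Rightarrow> rmat" where   \<comment> \<open>(2n+2) x 1: [L nu L gamma ... L gamma]^T\<close>
  "Dpsi1 L \<nu> \<gamma> = (\<lambda>i j. if odd i then (if i = 1 then \<nu> else \<gamma>) else L)"

definition Dpsi2 :: "nat \<Rightarrow> rmat" where   \<comment> \<open>(2n+2) x n: rows -e/n, e/n, -e_1, e_1, ..., -e_n, e_n\<close>
  "Dpsi2 n = (\<lambda>i j. if i = 0 then - 1 / real n else if i = 1 then 1 / real n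
                    else if j = (i - 2) div 2 then (if even i then -1 else 1) else 0)"

end

theory Submission
  imports Defs "Jordan_Normal_Form.Char_Poly"
begin



abbreviation PP :: "nat \<Rightarrow> nat \<Rightarrow> (nat \<Rightarrow> nat) pmf" where "PP n k \<equiv> Pi_pmf {..<k} (0::nat) (\<lambda>_. pmf_of_set {..<n})"

lemma set_PP: "n \<ge> 1 \<Longrightarrow> set_pmf (PP n k) = PiE_dflt {..<k} 0 (\<lambda>_. {..<n})"
proof -
  assume "n \<ge> 1"
  then have "set_pmf (pmf_of_set {..<n}) = {..<n}" by (subst set_pmf_of_set) (auto simp: lessThan_empty_iff)
  then show ?thesis by (subst set_Pi_pmf) (simp_all add: o_def)
qed

lemma fin_PP: "n \<ge> 1 \<Longrightarrow> finite (set_pmf (PP n k))"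
proof -
  assume n: "n \<ge> 1"
  have "PiE_dflt {..<k} 0 (\<lambda>_. {..<n}) \<subseteq> (\<lambda>f. \<lambda>x. if x < k then f x else 0) ` ({..<k} \<rightarrow>\<^sub>E {..<n})"
  proof
    fix f assume "f \<in> PiE_dflt {..<k} 0 (\<lambda>_. {..<n})"
    then have "f = (\<lambda>x. if x < k then (restrict f {..<k}) x else 0)" and "restrict f {..<k} \<in> {..<k} \<rightarrow>\<^sub>E {..<n}"
      by (auto simp: PiE_dflt_def fun_eq_iff)
    then show "f \<in> (\<lambda>f. \<lambda>x. if x < k then f x else 0) ` ({..<k} \<rightarrow>\<^sub>E {..<n})" by blast
  qed
  moreover have "finite ({..<k::nat} \<rightarrow>\<^sub>E {..<n::nat})" by (intro finite_PiE) auto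
  ultimately have "finite (PiE_dflt {..<k} 0 (\<lambda>_. {..<n}))" by (rule finite_subset[OF _ finite_imageI])
  then show ?thesis using set_PP[OF n] by simp
qed

lemma supp_PP: assumes "n \<ge> 1" "f \<in> set_pmf (PP n k)" "i < k" shows "f i < n"
  using assms(2,3) unfolding set_PP[OF assms(1)] PiE_dflt_def by blast

lemma Eidx_0: "Eidx n 0 h = h (\<lambda>_. 0)"
  by (simp add: Eidx_def)

lemma Eidx_Suc:
  assumes n: "n \<ge> 1"
  shows "Eidx n (Suc k) h = Eidx n k (\<lambda>f. (\<Sum>y<n. h (f(k:=y))) / real n)"
proof -
  have "{..<Suc k} = insert k {..<k}" by auto
  then have "PP n (Suc k) = pmf_of_set {..<n} \<bind> (\<lambda>y. map_pmf (\<lambda>f. f(k:=y)) (PP n k))"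
    by (simp add: Pi_pmf_insert' map_pmf_def)
  then have "Eidx n (Suc k) h = (\<Sum>y<n. measure_pmf.expectation (map_pmf (\<lambda>f. f(k:=y)) (PP n k)) h /\<^sub>R real (card {..<n}))"
    unfolding Eidx_def using n fin_PP[OF n]
    by (simp only:) (rule pmf_expectation_bind_pmf_of_set, auto simp: lessThan_empty_iff)
  also have "\<dots> = (\<Sum>y<n. measure_pmf.expectation (PP n k) (\<lambda>f. h (f(k:=y)) / real n))"
    apply (intro sum.cong refl)
    apply (simp only: integral_map_pmf card_lessThan integral_divide_zero)
    by (simp add: field_simps)
  also have "\<dots> = measure_pmf.expectation (PP n k) (\<lambda>f. (\<Sum>y<n. h (f(k:=y)) / real n))"
    by (subst Bochner_Integration.integral_sum) (simp_all only: integrable_measure_pmf_finite fin_PP[OF n])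
  finally show ?thesis unfolding Eidx_def by (simp only: sum_divide_distrib)
qed

lemma Eidx_mono:
  assumes n: "n \<ge> 1" and le: "\<And>f. (\<forall>i<k. f i < n) \<Longrightarrow> h f \<le> g f"
  shows "Eidx n k h \<le> Eidx n k g"
  unfolding Eidx_def
  apply (rule integral_mono_AE)
  using fin_PP[OF n] integrable_measure_pmf_finite apply blast
  using fin_PP[OF n] integrable_measure_pmf_finite apply blast
  apply (subst AE_measure_pmf_iff) using supp_PP[OF n] le by blast

lemma Eidx_cmult: "Eidx n k (\<lambda>f. c * h f) = c * Eidx n k h"
  unfolding Eidx_def by simp

lemma Eidx_div: "Eidx n k (\<lambda>f. h f / c) = Eidx n k h / c"
  unfolding Eidx_def by simp




lemma sum_split_add: "(\<Sum>r<d+(n::nat). (f r::'a::comm_monoid_add)) = (\<Sum>r<d. f r) + (\<Sum>j<n. f (d+j))"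
  by (induction n) (auto simp: add.assoc)

lemma sum_pairs: "(\<Sum>s<2*(N::nat). f s) = (\<Sum>m<N. f (2*m) + f (2*m+1))"
  by (induction N) (auto simp: algebra_simps)

lemma aux_swap4: "(\<Sum>k<q. \<Sum>l<q. F k r * Q k l * F l c * (w::real)) = (\<Sum>l<q. (\<Sum>k<q. F k r * Q k l) * F l c) * w"
  by (subst sum.swap) (simp add: sum_distrib_right)

lemma G1:
  fixes z :: "nat \<Rightarrow> 'v::real_inner"
  shows "kquad q Q (\<lambda>k. \<Sum>r<m. F k r *\<^sub>R z r)
     = (\<Sum>r<m. \<Sum>c<m. mmul q (mmul q (tr F) Q) F r c * (z r \<bullet> z c))"
proof -
  have "kquad q Q (\<lambda>k. \<Sum>r<m. F k r *\<^sub>R z r)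
     = (\<Sum>k<q. \<Sum>l<q. \<Sum>r<m. \<Sum>c<m. F k r * Q k l * F l c * (z r \<bullet> z c))"
    unfolding kquad_def
    apply (simp add: inner_sum_left inner_sum_right sum_distrib_left mult_ac)
    apply (rule sum.cong[OF refl], rule sum.cong[OF refl])
    by (rule sum.swap)
  also have "\<dots> = (\<Sum>k<q. \<Sum>r<m. \<Sum>l<q. \<Sum>c<m. F k r * Q k l * F l c * (z r \<bullet> z c))"
    by (rule sum.cong[OF refl], rule sum.swap)
  also have "\<dots> = (\<Sum>r<m. \<Sum>k<q. \<Sum>l<q. \<Sum>c<m. F k r * Q k l * F l c * (z r \<bullet> z c))"
    by (rule sum.swap)
  also have "\<dots> = (\<Sum>r<m. \<Sum>k<q. \<Sum>c<m. \<Sum>l<q. F k r * Q k l * F l c * (z r \<bullet> z c))"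
    by (intro sum.cong[OF refl], rule sum.swap)
  also have "\<dots> = (\<Sum>r<m. \<Sum>c<m. \<Sum>k<q. \<Sum>l<q. F k r * Q k l * F l c * (z r \<bullet> z c))"
    by (intro sum.cong[OF refl], rule sum.swap)
  also have "\<dots> = (\<Sum>r<m. \<Sum>c<m. mmul q (mmul q (tr F) Q) F r c * (z r \<bullet> z c))"
    unfolding mmul_def tr_def by (simp only: aux_swap4)
  finally show ?thesis .
qed

lemma G2:
  fixes z :: "nat \<Rightarrow> real^'p"
  assumes "nsd m M"
  shows "(\<Sum>r<m. \<Sum>c<m. M r c * (z r \<bullet> z c)) \<le> 0"
proof -
  have "(\<Sum>r<m. \<Sum>c<m. M r c * (z r \<bullet> z c)) = (\<Sum>i\<in>UNIV. quad m M (\<lambda>r. z r $ i))"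
    unfolding quad_def inner_vec_def
    apply (simp add: sum_distrib_left mult_ac)
    apply (rule trans[OF sum.cong[OF refl sum.swap]])
    by (rule sum.swap)
  also have "\<dots> \<le> 0" using assms unfolding nsd_def by (simp add: sum_nonpos)
  finally show ?thesis .
qed

lemma hcat_block:
  "r < d + n \<Longrightarrow> c < d + n \<Longrightarrow> mmul d (mmul d (tr (hcat d A B)) P) (hcat d A B) r c =
   block4 d d (mmul d (mmul d (tr A) P) A) (mmul d (mmul d (tr A) P) B)
              (mmul d (mmul d (tr B) P) A) (mmul d (mmul d (tr B) P) B) r c"
  unfolding mmul_def tr_def hcat_def block4_def by simp




lemma kquad_cong: "(\<And>a. a < d \<Longrightarrow> x a = x' a) \<Longrightarrow> kquad d P x = kquad d P x'"
  unfolding kquad_def by simp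

lemma Bm_val:
  assumes "m < Suc n" "m' < Suc n"
  shows "block4 1 1 (\<lambda>_ _. lam1) zerom zerom (\<lambda>a b. lam2 / real n * idm n a b) m m'
     = (if m = m' then (if m = 0 then lam1 else lam2 / real n) else 0)"
  using assms unfolding block4_def zerom_def idm_def by auto

lemma kquad_K:
  fixes h :: "nat \<Rightarrow> 'v::real_inner"
  shows "kquad (2 * n + 2) (kron 2 2 (block4 1 1 (\<lambda>_ _. lam1) zerom zerom (\<lambda>a b. lam2 / real n * idm n a b))
                         (\<lambda>a b. if a = b then 0 else 1)) h
    = 2 * lam1 * (h 0 \<bullet> h 1) + (\<Sum>i<n. 2 * (lam2 / real n) * (h (2*i+2) \<bullet> h (2*i+3)))"
proof -
  define B where "B = block4 1 1 (\<lambda>_ _. lam1) zerom zerom (\<lambda>a b. lam2 / real n * idm n a b)"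
  let ?B = B
  let ?K = "kron 2 2 ?B (\<lambda>a b. if a = b then 0 else 1)"
  have Bv: "B m m' = (if m = m' then (if m = 0 then lam1 else lam2 / real n) else 0)"
    if "m < Suc n" "m' < Suc n" for m m' unfolding B_def by (rule Bm_val[OF that])
  have N: "2 * n + 2 = 2 * Suc n" by simp
  have k1: "?K (2*m) (2*m') = 0" "?K (2*m) (2*m'+1) = ?B m m'"
       "?K (2*m+1) (2*m') = ?B m m'" "?K (2*m+1) (2*m'+1) = 0" for m m'
    unfolding kron_def by simp_all
  have "kquad (2 * n + 2) (kron 2 2 (block4 1 1 (\<lambda>_ _. lam1) zerom zerom (\<lambda>a b. lam2 / real n * idm n a b))
                         (\<lambda>a b. if a = b then 0 else 1)) h = (\<Sum>m<Suc n. \<Sum>m'<Suc n. ?B m m' * (h (2*m) \<bullet> h (2*m'+1)) + ?B m m' * (h (2*m+1) \<bullet> h (2*m')))"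
    unfolding B_def[symmetric] kquad_def N sum_pairs k1 by (simp add: sum.distrib)
  also have "\<dots> = (\<Sum>m<Suc n. (if m = 0 then lam1 else lam2 / real n) * (h (2*m) \<bullet> h (2*m+1)) + (if m = 0 then lam1 else lam2 / real n) * (h (2*m+1) \<bullet> h (2*m)))"
  proof (rule sum.cong[OF refl])
    fix m assume m: "m \<in> {..<Suc n}"
    have "(\<Sum>m'<Suc n. ?B m m' * (h (2*m) \<bullet> h (2*m'+1)) + ?B m m' * (h (2*m+1) \<bullet> h (2*m')))
        = (\<Sum>m'<Suc n. if m = m' then (if m = 0 then lam1 else lam2 / real n) * (h (2*m) \<bullet> h (2*m+1)) + (if m = 0 then lam1 else lam2 / real n) * (h (2*m+1) \<bullet> h (2*m)) else 0)"
      using m by (intro sum.cong refl) (simp add: Bv)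
    also have "\<dots> = (if m = 0 then lam1 else lam2 / real n) * (h (2*m) \<bullet> h (2*m+1)) + (if m = 0 then lam1 else lam2 / real n) * (h (2*m+1) \<bullet> h (2*m))"
      using m by (simp add: sum.delta')
    finally show "(\<Sum>m'<Suc n. ?B m m' * (h (2*m) \<bullet> h (2*m'+1)) + ?B m m' * (h (2*m+1) \<bullet> h (2*m'))) = \<dots>" .
  qed
  also have "\<dots> = 2 * lam1 * (h 0 \<bullet> h 1) + (\<Sum>i<n. 2 * (lam2 / real n) * (h (2*i+2) \<bullet> h (2*i+3)))"
    by (subst sum.lessThan_Suc_shift) (simp add: inner_commute algebra_simps eval_nat_numeral)
  finally show ?thesis .
qed




lemma Dpsi2_even: "Dpsi2 n (2*i+2) j = (if j = i then -1 else 0)"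
  unfolding Dpsi2_def by simp
lemma Dpsi2_odd: "Dpsi2 n (2*i+3) j = (if j = i then 1 else 0)"
proof -
  have a: "even (2*i+3) = False" by simp
  have b: "(2*i+3 - 2) div 2 = i" by simp
  have c: "(2*i+3 = 0) = False" "(2*i+3 = (1::nat)) = False" by simp_all
  show ?thesis unfolding Dpsi2_def by (simp only: a b c if_False if_True)
qed
lemma Dpsi1_even: "Dpsi1 L \<nu> \<gamma> (2*i+2) 0 = L"
  unfolding Dpsi1_def by simp
lemma Dpsi1_odd: "Dpsi1 L \<nu> \<gamma> (2*i+3) 0 = \<gamma>"
proof -
  have a: "odd (2*i+3) = True" by simp
  have c: "(2*i+3 = (1::nat)) = False" by simp
  show ?thesis unfolding Dpsi1_def by (simp only: a c if_False if_True)
qed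

lemma sum_delta_scaleR: "(\<Sum>j<n. (if j = i then a else 0) *\<^sub>R w j) = (if i < (n::nat) then a *\<^sub>R (w i::'a::real_vector) else 0)"
proof -
  have "(\<Sum>j<n. (if j = i then a else 0) *\<^sub>R w j) = (\<Sum>j<n. if j = i then a *\<^sub>R w j else 0)"
    by (rule sum.cong) auto
  then show ?thesis by simp
qed

lemma one_step:
  fixes n nxi :: nat
    and G :: "nat \<Rightarrow> real^'p \<Rightarrow> real^'p"
    and xs :: "real^'p" and xis \<xi> :: "nat \<Rightarrow> real^'p"
    and At Bt :: "nat \<Rightarrow> rmat" and Ct P :: rmat
    and L \<nu> \<gamma> \<rho> lam1 lam2 :: real
  assumes n_pos: "n \<ge> 1"
    and xis_fix: "\<forall>i<n. \<forall>a<nxi. xis a = kmv nxi (At i) xis a + kmv n (Bt i) (\<lambda>j. G j xs) a"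
    and xis_out: "kmv nxi Ct xis 0 = xs"
    and sector_avg: "\<forall>x. let u = x - xs; d = (\<Sum>j<n. G j x) /\<^sub>R real n - (\<Sum>j<n. G j xs) /\<^sub>R real n
                     in 2 * L * \<nu> * (u \<bullet> u) + 2 * (L - \<nu>) * (u \<bullet> d) + (-2) * (d \<bullet> d) \<ge> 0"
    and sector_i: "\<forall>x. \<forall>i<n. let u = x - xs; d = G i x - G i xs
                     in 2 * L * \<gamma> * (u \<bullet> u) + 2 * (L - \<gamma>) * (u \<bullet> d) + (-2) * (d \<bullet> d) \<ge> 0"
    and lam1_nn: "lam1 \<ge> 0" and lam2_nn: "lam2 \<ge> 0"
    and LMI: "nsd (nxi + n)
      (\<lambda>r c. block4 nxi nxi
          (\<lambda>a b. (\<Sum>i<n. mmul nxi (mmul nxi (tr (At i)) P) (At i) a b) / real n - \<rho>^2 * P a b)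
          (\<lambda>a b. (\<Sum>i<n. mmul nxi (mmul nxi (tr (At i)) P) (Bt i) a b) / real n)
          (\<lambda>a b. (\<Sum>i<n. mmul nxi (mmul nxi (tr (Bt i)) P) (At i) a b) / real n)
          (\<lambda>a b. (\<Sum>i<n. mmul nxi (mmul nxi (tr (Bt i)) P) (Bt i) a b) / real n) r c
        + mmul (2 * n + 2)
            (mmul (2 * n + 2) (tr (hcat nxi (mmul 1 (Dpsi1 L \<nu> \<gamma>) Ct) (Dpsi2 n)))
               (kron 2 2 (block4 1 1 (\<lambda>_ _. lam1) zerom zerom (\<lambda>a b. lam2 / real n * idm n a b))
                         (\<lambda>a b. if a = b then 0 else 1)))
            (hcat nxi (mmul 1 (Dpsi1 L \<nu> \<gamma>) Ct) (Dpsi2 n)) r c)"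
  shows "(\<Sum>y<n. kquad nxi P (\<lambda>a. kmv nxi (At y) \<xi> a + kmv n (Bt y) (\<lambda>j. G j (kmv nxi Ct \<xi> 0)) a - xis a)) / real n
         \<le> \<rho>^2 * kquad nxi P (\<lambda>a. \<xi> a - xis a)"
proof -
  define v where "v = kmv nxi Ct \<xi> 0"
  define e where "e = (\<lambda>a. \<xi> a - xis a)"
  define wt where "wt = (\<lambda>j. G j v - G j xs)"
  define z where "z = (\<lambda>r. if r < nxi then e r else wt (r - nxi))"
  define m where "m = nxi + n"
  define W where "W = (\<lambda>r c. z r \<bullet> z c)"
  define X where "X = (\<lambda>y. block4 nxi nxi (mmul nxi (mmul nxi (tr (At y)) P) (At y)) (mmul nxi (mmul nxi (tr (At y)) P) (Bt y))
                (mmul nxi (mmul nxi (tr (Bt y)) P) (At y)) (mmul nxi (mmul nxi (tr (Bt y)) P) (Bt y)))"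
  define M1 where "M1 = block4 nxi nxi
          (\<lambda>a b. (\<Sum>i<n. mmul nxi (mmul nxi (tr (At i)) P) (At i) a b) / real n - \<rho>^2 * P a b)
          (\<lambda>a b. (\<Sum>i<n. mmul nxi (mmul nxi (tr (At i)) P) (Bt i) a b) / real n)
          (\<lambda>a b. (\<Sum>i<n. mmul nxi (mmul nxi (tr (Bt i)) P) (At i) a b) / real n)
          (\<lambda>a b. (\<Sum>i<n. mmul nxi (mmul nxi (tr (Bt i)) P) (Bt i) a b) / real n)"
  define H where "H = hcat nxi (mmul 1 (Dpsi1 L \<nu> \<gamma>) Ct) (Dpsi2 n)"
  define K where "K = kron 2 2 (block4 1 1 (\<lambda>_ _. lam1) zerom zerom (\<lambda>a b. lam2 / real n * idm n a b))
                         (\<lambda>a b. if a = b then (0::real) else 1)"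
  define M2 where "M2 = mmul (2 * n + 2) (mmul (2 * n + 2) (tr H) K) H"
  define hh where "hh = (\<lambda>s. \<Sum>r<m. H s r *\<^sub>R z r)"
  have nr: "real n > 0" using n_pos by simp

  have LMI': "nsd m (\<lambda>r c. M1 r c + M2 r c)"
    unfolding M1_def M2_def H_def K_def m_def using LMI by simp

  have step_eq: "kquad nxi P (\<lambda>a. kmv nxi (At y) \<xi> a + kmv n (Bt y) (\<lambda>j. G j (kmv nxi Ct \<xi> 0)) a - xis a)
      = (\<Sum>r<m. \<Sum>c<m. X y r c * W r c)" if y: "y < n" for y
  proof -
    have "kquad nxi P (\<lambda>a. kmv nxi (At y) \<xi> a + kmv n (Bt y) (\<lambda>j. G j (kmv nxi Ct \<xi> 0)) a - xis a)
        = kquad nxi P (\<lambda>a. \<Sum>r<m. hcat nxi (At y) (Bt y) a r *\<^sub>R z r)"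
    proof (rule kquad_cong)
      fix a assume a: "a < nxi"
      have xa: "xis a = kmv nxi (At y) xis a + kmv n (Bt y) (\<lambda>j. G j xs) a" using xis_fix y a by blast
      show "kmv nxi (At y) \<xi> a + kmv n (Bt y) (\<lambda>j. G j (kmv nxi Ct \<xi> 0)) a - xis a
          = (\<Sum>r<m. hcat nxi (At y) (Bt y) a r *\<^sub>R z r)"
        unfolding m_def sum_split_add
        by (subst xa) (simp add: kmv_def hcat_def z_def e_def wt_def v_def scaleR_diff_right sum_subtractf algebra_simps)
    qed
    also have "\<dots> = (\<Sum>r<m. \<Sum>c<m. mmul nxi (mmul nxi (tr (hcat nxi (At y) (Bt y))) P) (hcat nxi (At y) (Bt y)) r c * (z r \<bullet> z c))"
      by (rule G1)
    also have "\<dots> = (\<Sum>r<m. \<Sum>c<m. X y r c * W r c)"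
      unfolding X_def W_def m_def by (intro sum.cong refl) (simp add: hcat_block)
    finally show ?thesis .
  qed

  have sumV: "(\<Sum>y<n. kquad nxi P (\<lambda>a. kmv nxi (At y) \<xi> a + kmv n (Bt y) (\<lambda>j. G j (kmv nxi Ct \<xi> 0)) a - xis a)) / real n
      = (\<Sum>r<m. \<Sum>c<m. ((\<Sum>y<n. X y r c) / real n) * W r c)"
  proof -
    have "(\<Sum>y<n. kquad nxi P (\<lambda>a. kmv nxi (At y) \<xi> a + kmv n (Bt y) (\<lambda>j. G j (kmv nxi Ct \<xi> 0)) a - xis a))
        = (\<Sum>y<n. \<Sum>r<m. \<Sum>c<m. X y r c * W r c)" by (rule sum.cong[OF refl]) (simp add: step_eq)
    also have "\<dots> = (\<Sum>r<m. \<Sum>c<m. \<Sum>y<n. X y r c * W r c)"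
      by (rule trans[OF sum.swap], rule sum.cong[OF refl sum.swap])
    finally show ?thesis
      by (simp add: sum_divide_distrib sum_distrib_right)
  qed

  have M1eq: "M1 r c = (\<Sum>y<n. X y r c) / real n - (if r < nxi \<and> c < nxi then \<rho>^2 * P r c else 0)" for r c
    unfolding M1_def X_def by (cases "r < nxi"; cases "c < nxi") (simp_all add: block4_def)

  have Peq: "(\<Sum>r<m. \<Sum>c<m. (if r < nxi \<and> c < nxi then \<rho>^2 * P r c else 0) * W r c) = \<rho>^2 * kquad nxi P e"
    unfolding m_def sum_split_add W_def z_def kquad_def
    by (simp add: sum_distrib_left mult_ac)

  have M2eq: "(\<Sum>r<m. \<Sum>c<m. M2 r c * W r c) = kquad (2*n+2) K hh"
    unfolding M2_def W_def hh_def by (rule G1[symmetric])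

  define u where "u = v - xs"
  have u_eq: "(\<Sum>r<nxi. Ct 0 r *\<^sub>R e r) = u"
    unfolding u_def v_def xis_out[symmetric] kmv_def e_def by (simp add: scaleR_diff_right sum_subtractf)
  have hh_eq: "hh s = Dpsi1 L \<nu> \<gamma> s 0 *\<^sub>R u + (\<Sum>j<n. Dpsi2 n s j *\<^sub>R wt j)" for s
    unfolding hh_def m_def sum_split_add H_def hcat_def mmul_def u_eq[symmetric]
    by (simp add: z_def scaleR_sum_right)
  define dd where "dd = (\<Sum>j<n. G j v) /\<^sub>R real n - (\<Sum>j<n. G j xs) /\<^sub>R real n"
  have dd_eq: "(\<Sum>j<n. (1 / real n) *\<^sub>R wt j) = dd"
    unfolding dd_def wt_def by (simp add: scaleR_sum_right[symmetric] sum_subtractf scaleR_diff_right inverse_eq_divide)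
  have hh0: "hh 0 = L *\<^sub>R u - dd"
  proof -
    have "(\<Sum>j<n. Dpsi2 n 0 j *\<^sub>R wt j) = - (\<Sum>j<n. (1 / real n) *\<^sub>R wt j)"
      unfolding Dpsi2_def by (simp add: sum_negf[symmetric])
    then show ?thesis unfolding hh_eq dd_eq by (simp add: Dpsi1_def)
  qed
  have hh1: "hh 1 = \<nu> *\<^sub>R u + dd"
  proof -
    have "(\<Sum>j<n. Dpsi2 n 1 j *\<^sub>R wt j) = (\<Sum>j<n. (1 / real n) *\<^sub>R wt j)"
      unfolding Dpsi2_def by simp
    then show ?thesis unfolding hh_eq dd_eq by (simp add: Dpsi1_def)
  qed
  have hh2: "hh (2*i+2) = L *\<^sub>R u - wt i" if "i < n" for i
  proof -
    have "hh (2*i+2) = L *\<^sub>R u + (if i < n then (-1) *\<^sub>R wt i else 0)"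
      unfolding hh_eq Dpsi2_even Dpsi1_even sum_delta_scaleR by (rule refl)
    then show ?thesis using that by simp
  qed
  have hh3: "hh (2*i+3) = \<gamma> *\<^sub>R u + wt i" if "i < n" for i
  proof -
    have "hh (2*i+3) = \<gamma> *\<^sub>R u + (if i < n then 1 *\<^sub>R wt i else 0)"
      unfolding hh_eq Dpsi2_odd Dpsi1_odd sum_delta_scaleR by (rule refl)
    then show ?thesis using that by simp
  qed

  have pos0: "0 \<le> 2 * lam1 * (hh 0 \<bullet> hh 1)"
  proof -
    have s: "2 * L * \<nu> * (u \<bullet> u) + 2 * (L - \<nu>) * (u \<bullet> dd) + (-2) * (dd \<bullet> dd) \<ge> 0"
      using sector_avg[rule_format, of v] unfolding Let_def u_def dd_def .
    have "2 * (hh 0 \<bullet> hh 1) = 2 * L * \<nu> * (u \<bullet> u) + 2 * (L - \<nu>) * (u \<bullet> dd) + (-2) * (dd \<bullet> dd)"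
      unfolding hh0 hh1 by (simp add: inner_diff_left inner_add_right inner_commute[of dd u] algebra_simps)
    then have "hh 0 \<bullet> hh 1 \<ge> 0" using s by linarith
    then show ?thesis using lam1_nn by simp
  qed
  have posi: "0 \<le> 2 * (lam2 / real n) * (hh (2*i+2) \<bullet> hh (2*i+3))" if i: "i < n" for i
  proof -
    have s: "2 * L * \<gamma> * (u \<bullet> u) + 2 * (L - \<gamma>) * (u \<bullet> wt i) + (-2) * (wt i \<bullet> wt i) \<ge> 0"
      using sector_i[rule_format, of i v] i unfolding Let_def u_def wt_def by simp
    have "2 * (hh (2*i+2) \<bullet> hh (2*i+3)) = 2 * L * \<gamma> * (u \<bullet> u) + 2 * (L - \<gamma>) * (u \<bullet> wt i) + (-2) * (wt i \<bullet> wt i)"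
      unfolding hh2[OF i] hh3[OF i] by (simp add: inner_diff_left inner_add_right inner_commute[of "wt i" u] algebra_simps)
    then have "hh (2*i+2) \<bullet> hh (2*i+3) \<ge> 0" using s by linarith
    then show ?thesis using lam2_nn nr by simp
  qed
  have hhpos: "kquad (2*n+2) K hh \<ge> 0"
  proof -
    have "(\<Sum>i<n. 2 * (lam2 / real n) * (hh (2*i+2) \<bullet> hh (2*i+3))) \<ge> 0"
      by (rule sum_nonneg) (use posi in blast)
    then show ?thesis unfolding K_def kquad_K using pos0 by linarith
  qed

  have "(\<Sum>r<m. \<Sum>c<m. (M1 r c + M2 r c) * W r c) \<le> 0"
    using G2[OF LMI', of z] unfolding W_def .
  moreover have "(\<Sum>r<m. \<Sum>c<m. (M1 r c + M2 r c) * W r c)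
     = (\<Sum>r<m. \<Sum>c<m. ((\<Sum>y<n. X y r c) / real n) * W r c)
       - (\<Sum>r<m. \<Sum>c<m. (if r < nxi \<and> c < nxi then \<rho>^2 * P r c else 0) * W r c)
       + (\<Sum>r<m. \<Sum>c<m. M2 r c * W r c)"
    unfolding M1eq by (simp add: algebra_simps sum.distrib sum_subtractf)
  ultimately show ?thesis
    unfolding sumV e_def[symmetric] using Peq M2eq hhpos by linarith
qed




definition nsq :: "nat \<Rightarrow> (nat \<Rightarrow> real) \<Rightarrow> real" where
  "nsq d x = (\<Sum>a<d. (x a)^2)"

lemma lin_quad_zero:
  fixes a b :: real
  assumes "\<forall>t. a * t + b * t^2 \<le> 0"
  shows "a = 0"
proof -
  define c where "c = \<bar>b\<bar> + 1"
  have c: "c > 0" unfolding c_def by simp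
  have "a * (a / c) + b * (a / c)^2 \<le> 0" using assms by blast
  then have "(a * (a / c) + b * (a / c)^2) * c^2 \<le> 0" using c by (simp add: mult_nonpos_nonneg)
  moreover have "(a * (a / c) + b * (a / c)^2) * c^2 = a^2 * (c + b)"
    using c by (simp add: field_simps power2_eq_square)
  ultimately have "a^2 * (c + b) \<le> 0" by simp
  moreover have cb: "c + b \<ge> 1" unfolding c_def by linarith
  moreover have "a^2 * 1 \<le> a^2 * (c + b)" using \<open>c + b \<ge> 1\<close> by (intro mult_left_mono) simp_all
  ultimately have "a^2 \<le> 0" by linarith
  then show ?thesis by simp
qed

lemma compact_box: "compact (Pi\<^sub>E UNIV (\<lambda>i::nat. if i < d then {-1..1::real} else {0}))"
proof -
  have "compactin (product_topology (\<lambda>i. euclidean) UNIV) (Pi\<^sub>E UNIV (\<lambda>i::nat. if i < d then {-1..1::real} else {0}))"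
    by (subst compactin_PiE) auto
  then show ?thesis by (simp add: euclidean_product_topology)
qed

lemma cont_quad: "continuous_on S (\<lambda>x::nat\<Rightarrow>real. quad d Q x)"
  unfolding quad_def
  by (intro continuous_intros continuous_on_subset[OF continuous_on_product_coordinates]) auto

lemma cont_nsq: "continuous_on S (\<lambda>x::nat\<Rightarrow>real. nsq d x)"
  unfolding nsq_def
  by (intro continuous_intros continuous_on_subset[OF continuous_on_product_coordinates]) auto

lemma quad_expand:
  assumes "symm d Q"
  shows "quad d Q (\<lambda>a. x a + t * y a) = quad d Q x + 2 * t * (\<Sum>i<d. \<Sum>j<d. y i * Q i j * x j) + t^2 * quad d Q y"
proof -
  have sw: "(\<Sum>i<d. \<Sum>j<d. x i * Q i j * y j) = (\<Sum>i<d. \<Sum>j<d. y i * Q i j * x j)"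
  proof -
    have "(\<Sum>i<d. \<Sum>j<d. x i * Q i j * y j) = (\<Sum>j<d. \<Sum>i<d. x i * Q i j * y j)" by (rule sum.swap)
    also have "\<dots> = (\<Sum>j<d. \<Sum>i<d. y j * Q j i * x i)"
      using assms unfolding symm_def by (intro sum.cong refl) (simp add: mult_ac)
    finally show ?thesis .
  qed
  have "quad d Q (\<lambda>a. x a + t * y a) = quad d Q x + t * (\<Sum>i<d. \<Sum>j<d. x i * Q i j * y j) + t * (\<Sum>i<d. \<Sum>j<d. y i * Q i j * x j) + t^2 * quad d Q y"
    unfolding quad_def by (simp add: algebra_simps sum.distrib sum_distrib_left power2_eq_square)
  then show ?thesis using sw by simp
qed

lemma nsq_expand:
  "nsq d (\<lambda>a. x a + t * y a) = nsq d x + 2 * t * (\<Sum>i<d. y i * x i) + t^2 * nsq d y"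
  unfolding nsq_def by (simp add: algebra_simps sum.distrib sum_distrib_left power2_eq_square)

lemma quad_restrict: "quad d Q (\<lambda>a. if a < d then x a else 0) = quad d Q x"
  unfolding quad_def by simp
lemma nsq_restrict: "nsq d (\<lambda>a. if a < d then x a else 0) = nsq d x"
  unfolding nsq_def by simp

lemma quad_scale: "quad d Q (\<lambda>a. c * x a) = c^2 * quad d Q x"
  unfolding quad_def by (simp add: sum_distrib_left power2_eq_square mult_ac)
lemma nsq_scale: "nsq d (\<lambda>a. c * x a) = c^2 * nsq d x"
  unfolding nsq_def by (simp add: sum_distrib_left power_mult_distrib)

lemma nsq_nonneg: "nsq d x \<ge> 0"
  unfolding nsq_def by (simp add: sum_nonneg)

lemma nsq_zero: "nsq d x = 0 \<Longrightarrow> a < d \<Longrightarrow> x a = 0"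
  unfolding nsq_def by (subst (asm) sum_nonneg_eq_0_iff) auto

lemma quad_zero: "(\<And>a. a < d \<Longrightarrow> x a = 0) \<Longrightarrow> quad d Q x = 0"
  unfolding quad_def by simp

lemma max_eig:
  assumes d: "d \<ge> 1" and Qs: "symm d Q"
  shows "\<exists>\<mu>. eigval d Q \<mu> \<and> (\<forall>x. quad d Q x \<le> \<mu> * nsq d x)"
proof -
  define C where "C = Pi\<^sub>E UNIV (\<lambda>i::nat. if i < d then {-1..1::real} else {0})"
  define S where "S = C \<inter> {x. nsq d x = 1}"
  have cS: "compact S" unfolding S_def C_def
    by (intro compact_Int_closed compact_box closed_Collect_eq cont_nsq continuous_on_const)
  have e0: "(\<lambda>i. if i = 0 then 1 else 0::real) \<in> S"
  proof -
    have "(\<Sum>a<d. (if a = 0 then 1 else 0::real)^2) = (\<Sum>a<d. if a = 0 then 1 else 0)"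
      by (intro sum.cong) auto
    also have "\<dots> = 1" using d by simp
    finally show ?thesis using d unfolding S_def C_def nsq_def by (auto simp: PiE_def)
  qed
  then have ne: "S \<noteq> {}" by blast
  obtain x0 where x0: "x0 \<in> S" and mx: "\<forall>y\<in>S. quad d Q y \<le> quad d Q x0"
    using continuous_attains_sup[OF cS ne cont_quad] by blast
  define \<mu> where "\<mu> = quad d Q x0"
  have x0n: "nsq d x0 = 1" using x0 unfolding S_def by simp
  have bound: "quad d Q x \<le> \<mu> * nsq d x" for x
  proof (cases "nsq d x = 0")
    case True
    then have "quad d Q x = 0" by (intro quad_zero nsq_zero)
    then show ?thesis using True by simp
  next
    case False
    then have pos: "nsq d x > 0" using nsq_nonneg[of d x] by linarith
    define s where "s = sqrt (nsq d x)"
    have s: "s > 0" "s^2 = nsq d x" unfolding s_def using pos by auto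
    define y where "y = (\<lambda>a. if a < d then (1/s) * x a else 0)"
    have ny: "nsq d y = 1" unfolding y_def nsq_restrict[of d "\<lambda>a. (1/s) * x a"] nsq_scale
      using s pos by (simp add: power_divide)
    have "y \<in> C" unfolding C_def
    proof (rule PiE_I)
      fix i show "y i \<in> (if i < d then {-1..1} else {0})"
      proof (cases "i < d")
        case True
        have "(y i)^2 \<le> nsq d y" unfolding nsq_def
          using True by (intro member_le_sum) auto
        then have "\<bar>y i\<bar> \<le> 1" using ny by (simp add: abs_square_le_1)
        then show ?thesis using True by auto
      qed (simp add: y_def)
    qed auto
    then have "y \<in> S" using ny unfolding S_def by simp
    then have "quad d Q y \<le> \<mu>" using mx unfolding \<mu>_def by blast
    moreover have "quad d Q y = (1/s)^2 * quad d Q x"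
      unfolding y_def quad_restrict[of d Q "\<lambda>a. (1/s) * x a"] quad_scale ..
    ultimately have "(1/s)^2 * quad d Q x \<le> \<mu>" by simp
    then have "quad d Q x / nsq d x \<le> \<mu>" using s by (simp add: power_divide)
    then show ?thesis using pos by (simp add: pos_divide_le_eq)
  qed
  have eig: "(\<Sum>j<d. Q i j * x0 j) = \<mu> * x0 i" if i: "i < d" for i
  proof -
    define y where "y = (\<lambda>a. if a = i then 1 else 0::real)"
    have "(\<Sum>a<d. \<Sum>b<d. y a * Q a b * x0 b) = (\<Sum>a<d. if a = i then (\<Sum>b<d. Q a b * x0 b) else 0)"
      by (rule sum.cong) (auto simp: y_def)
    then have qy: "(\<Sum>a<d. \<Sum>b<d. y a * Q a b * x0 b) = (\<Sum>j<d. Q i j * x0 j)"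
      using i by simp
    have "(\<Sum>a<d. y a * x0 a) = (\<Sum>a<d. if a = i then x0 a else 0)"
      by (rule sum.cong) (auto simp: y_def)
    then have ny: "(\<Sum>a<d. y a * x0 a) = x0 i" using i by simp
    have "\<forall>t. 2 * ((\<Sum>j<d. Q i j * x0 j) - \<mu> * x0 i) * t + (quad d Q y - \<mu> * nsq d y) * t^2 \<le> 0"
    proof
      fix t
      have "quad d Q (\<lambda>a. x0 a + t * y a) \<le> \<mu> * nsq d (\<lambda>a. x0 a + t * y a)" by (rule bound)
      then show "2 * ((\<Sum>j<d. Q i j * x0 j) - \<mu> * x0 i) * t + (quad d Q y - \<mu> * nsq d y) * t^2 \<le> 0"
        unfolding quad_expand[OF Qs] nsq_expand qy ny x0n \<mu>_def[symmetric]
        by (simp add: algebra_simps)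
    qed
    then have "2 * ((\<Sum>j<d. Q i j * x0 j) - \<mu> * x0 i) = 0" by (rule lin_quad_zero)
    then show ?thesis by simp
  qed
  have "\<exists>i<d. x0 i \<noteq> 0"
  proof (rule ccontr)
    assume "\<not> (\<exists>i<d. x0 i \<noteq> 0)"
    then have "nsq d x0 = 0" unfolding nsq_def by simp
    then show False using x0n by simp
  qed
  then have "eigval d Q \<mu>" unfolding eigval_def using eig by blast
  then show ?thesis using bound by blast
qed




lemma quad_eig: "(\<forall>i<d. (\<Sum>j<d. Q i j * v j) = l * v i) \<Longrightarrow> quad d Q v = l * nsq d v"
  unfolding quad_def nsq_def
  by (simp add: mult.assoc sum_distrib_left[symmetric] power2_eq_square mult_ac)

lemma nsq_pos: "i < d \<Longrightarrow> v i \<noteq> 0 \<Longrightarrow> nsq d v > 0"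
  using nsq_zero[of d v i] nsq_nonneg[of d v] by linarith

lemma finite_eig: "finite {l. eigval d Q l}"
proof -
  define A where "A = mat d d (\<lambda>(i,j). Q i j)"
  have A: "A \<in> carrier_mat d d" unfolding A_def by simp
  have "{l. eigval d Q l} \<subseteq> {l. poly (char_poly A) l = 0}"
  proof
    fix l assume "l \<in> {l. eigval d Q l}"
    then obtain v where v: "\<exists>i<d. v i \<noteq> 0" "\<forall>i<d. (\<Sum>j<d. Q i j * v j) = l * v i"
      unfolding eigval_def by blast
    define w where "w = vec d (\<lambda>i. v i)"
    have "eigenvector A w l" unfolding eigenvector_def
    proof (intro conjI)
      show "w \<in> carrier_vec (dim_row A)" unfolding w_def A_def by simp
      show "w \<noteq> 0\<^sub>v (dim_row A)"
      proof
        assume "w = 0\<^sub>v (dim_row A)"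
        then have "\<forall>i<d. v i = 0" unfolding w_def A_def by (metis dim_row_mat(1) index_vec index_zero_vec(1))
        then show False using v(1) by blast
      qed
      show "A *\<^sub>v w = l \<cdot>\<^sub>v w"
      proof (rule eq_vecI)
        fix i assume "i < dim_vec (l \<cdot>\<^sub>v w)"
        then have i: "i < d" unfolding w_def by simp
        have "(A *\<^sub>v w) $ i = (\<Sum>j<d. Q i j * v j)"
          using i unfolding A_def w_def by (simp add: scalar_prod_def atLeast0LessThan)
        also have "\<dots> = (l \<cdot>\<^sub>v w) $ i" using v(2) i unfolding w_def by simp
        finally show "(A *\<^sub>v w) $ i = (l \<cdot>\<^sub>v w) $ i" .
      qed (simp add: A_def w_def)
    qed
    then have "eigenvalue A l" unfolding eigenvalue_def by blast
    then show "l \<in> {l. poly (char_poly A) l = 0}" using eigenvalue_root_char_poly[OF A] by simp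
  qed
  moreover have "char_poly A \<noteq> 0"
    using degree_monic_char_poly[OF A] by auto
  ultimately show ?thesis using poly_roots_finite finite_subset by blast
qed

lemma spec_bounds:
  assumes d: "d \<ge> 1" and Ps: "symm d P" and Pp: "pdef d P"
  shows "\<exists>lmax lmin. cond d P = lmax / lmin \<and> lmin > 0 \<and> (\<forall>x. quad d P x \<le> lmax * nsq d x)
            \<and> (\<forall>x. lmin * nsq d x \<le> quad d P x)"
proof -
  define E where "E = {l. eigval d P l}"
  have fE: "finite E" unfolding E_def by (rule finite_eig)
  obtain \<mu> where \<mu>: "eigval d P \<mu>" "\<forall>x. quad d P x \<le> \<mu> * nsq d x" using max_eig[OF d Ps] by blast
  have "\<forall>l\<in>E. l \<le> \<mu>"
  proof
    fix l assume "l \<in> E"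
    then obtain v i where v: "i < d" "v i \<noteq> 0" "\<forall>i<d. (\<Sum>j<d. P i j * v j) = l * v i"
      unfolding E_def eigval_def by blast
    have "l * nsq d v \<le> \<mu> * nsq d v" using quad_eig[OF v(3)] \<mu>(2) by metis
    then show "l \<le> \<mu>" using nsq_pos[of i d v, OF v(1,2)] by simp
  qed
  then have mx: "Max E = \<mu>" using fE \<mu>(1) unfolding E_def by (intro Max_eqI) auto
  define Q where "Q = (\<lambda>i j. - P i j)"
  have Qs: "symm d Q" using Ps unfolding symm_def Q_def by simp
  obtain \<mu>' where \<mu>': "eigval d Q \<mu>'" "\<forall>x. quad d Q x \<le> \<mu>' * nsq d x" using max_eig[OF d Qs] by blast
  have qQ: "quad d Q x = - quad d P x" for x unfolding quad_def Q_def by (simp add: sum_negf)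
  have eQ: "eigval d P (-\<mu>')"
  proof -
    obtain v where v: "\<exists>i<d. v i \<noteq> 0" "\<forall>i<d. (\<Sum>j<d. Q i j * v j) = \<mu>' * v i"
      using \<mu>'(1) unfolding eigval_def by blast
    have "\<forall>i<d. (\<Sum>j<d. P i j * v j) = (-\<mu>') * v i"
    proof (intro allI impI)
      fix i assume "i < d"
      then have "(\<Sum>j<d. Q i j * v j) = \<mu>' * v i" using v(2) by blast
      then show "(\<Sum>j<d. P i j * v j) = (-\<mu>') * v i" unfolding Q_def by (simp add: sum_negf)
    qed
    then show ?thesis unfolding eigval_def using v(1) by blast
  qed
  have "\<forall>l\<in>E. -\<mu>' \<le> l"
  proof
    fix l assume "l \<in> E"
    then obtain v i where v: "i < d" "v i \<noteq> 0" "\<forall>i<d. (\<Sum>j<d. P i j * v j) = l * v i"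
      unfolding E_def eigval_def by blast
    have "- (l * nsq d v) \<le> \<mu>' * nsq d v" using quad_eig[OF v(3)] \<mu>'(2) qQ by metis
    then have "(-\<mu>') * nsq d v \<le> l * nsq d v" by simp
    then show "-\<mu>' \<le> l" using nsq_pos[of i d v, OF v(1,2)] by (rule mult_right_le_imp_le)
  qed
  then have mn: "Min E = -\<mu>'" using fE eQ unfolding E_def by (intro Min_eqI) auto
  have pos: "-\<mu>' > 0"
  proof -
    obtain v i where v: "i < d" "v i \<noteq> 0" "\<forall>i<d. (\<Sum>j<d. P i j * v j) = (-\<mu>') * v i"
      using eQ unfolding eigval_def by blast
    have "quad d P v > 0" using Pp v(1,2) unfolding pdef_def by blast
    then have "(-\<mu>') * nsq d v > 0" using quad_eig[OF v(3)] by simp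
    then show ?thesis using nsq_pos[of i d v, OF v(1,2)] by (simp add: zero_less_mult_iff mult_less_0_iff)
  qed
  have "\<forall>x. (-\<mu>') * nsq d x \<le> quad d P x" using \<mu>'(2) qQ by (metis minus_le_iff mult_minus_left)
  moreover have "cond d P = \<mu> / (-\<mu>')" unfolding cond_def E_def[symmetric] mx mn ..
  ultimately show ?thesis using \<mu>(2) pos by blast
qed




lemma kquad_coord:
  fixes \<xi> :: "nat \<Rightarrow> real^'p"
  shows "kquad d P \<xi> = (\<Sum>q\<in>UNIV. quad d P (\<lambda>a. \<xi> a $ q))"
  unfolding kquad_def quad_def inner_vec_def
  apply (simp add: sum_distrib_left mult_ac)
  apply (rule trans[OF sum.cong[OF refl sum.swap]])
  by (rule sum.swap)

lemma bnorm2_coord: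
  fixes \<xi> :: "nat \<Rightarrow> real^'p"
  shows "bnorm2 d \<xi> = (\<Sum>q\<in>UNIV. nsq d (\<lambda>a. \<xi> a $ q))"
  unfolding bnorm2_def nsq_def power2_norm_eq_inner inner_vec_def
  by (simp add: power2_eq_square sum.swap[of _ "{..<d}" UNIV])

lemma traj_prefix:
  "(\<forall>i<k. \<sigma> i = \<sigma>' i) \<Longrightarrow> traj nxi n At Bt Ct G xi0 \<sigma> k = traj nxi n At Bt Ct G xi0 \<sigma>' k"
  by (induction k) (auto simp: Let_def)

lemma traj_Suc_upd:
  "traj nxi n At Bt Ct G xi0 (f(k:=y)) (Suc k) =
    (\<lambda>a. kmv nxi (At y) (traj nxi n At Bt Ct G xi0 f k) a
       + kmv n (Bt y) (\<lambda>j. G j (kmv nxi Ct (traj nxi n At Bt Ct G xi0 f k) 0)) a)"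
proof -
  have "traj nxi n At Bt Ct G xi0 (f(k:=y)) k = traj nxi n At Bt Ct G xi0 f k"
    by (rule traj_prefix) simp
  then show ?thesis by (simp add: Let_def)
qed




theorem theorem1:
  fixes n nxi :: nat
    and f :: "nat \<Rightarrow> real^'p \<Rightarrow> real" and G :: "nat \<Rightarrow> real^'p \<Rightarrow> real^'p"
    and xs :: "real^'p" and xis :: "nat \<Rightarrow> real^'p"
    and At Bt :: "nat \<Rightarrow> rmat" and Ct P :: rmat
    and L \<nu> \<gamma> \<rho> lam1 lam2 :: real
  assumes n_pos: "n \<ge> 1" and nxi_pos: "nxi \<ge> 1"
    and grad: "\<forall>i<n. \<forall>x. GDERIV (f i) x :> G i x"
    and grad_cont: "\<forall>i<n. continuous_on UNIV (G i)"
    and xs_stat: "GDERIV (\<lambda>x. (\<Sum>i<n. f i x) / real n) xs :> 0"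
    and xs_unique: "\<forall>x. GDERIV (\<lambda>x. (\<Sum>i<n. f i x) / real n) x :> 0 \<longrightarrow> x = xs"
    and xis_fix: "\<forall>i<n. \<forall>a<nxi. xis a = kmv nxi (At i) xis a + kmv n (Bt i) (\<lambda>j. G j xs) a"
    and xis_out: "kmv nxi Ct xis 0 = xs"
    and sector_avg: "\<forall>x. let u = x - xs; d = (\<Sum>j<n. G j x) /\<^sub>R real n - (\<Sum>j<n. G j xs) /\<^sub>R real n
                     in 2 * L * \<nu> * (u \<bullet> u) + 2 * (L - \<nu>) * (u \<bullet> d) + (-2) * (d \<bullet> d) \<ge> 0"
    and sector_i: "\<forall>x. \<forall>i<n. let u = x - xs; d = G i x - G i xs
                     in 2 * L * \<gamma> * (u \<bullet> u) + 2 * (L - \<gamma>) * (u \<bullet> d) + (-2) * (d \<bullet> d) \<ge> 0"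
    and P_sym: "symm nxi P" and P_pd: "pdef nxi P"
    and lam1_nn: "lam1 \<ge> 0" and lam2_nn: "lam2 \<ge> 0"
    and LMI: "nsd (nxi + n)
      (\<lambda>r c. block4 nxi nxi
          (\<lambda>a b. (\<Sum>i<n. mmul nxi (mmul nxi (tr (At i)) P) (At i) a b) / real n - \<rho>^2 * P a b)
          (\<lambda>a b. (\<Sum>i<n. mmul nxi (mmul nxi (tr (At i)) P) (Bt i) a b) / real n)
          (\<lambda>a b. (\<Sum>i<n. mmul nxi (mmul nxi (tr (Bt i)) P) (At i) a b) / real n)
          (\<lambda>a b. (\<Sum>i<n. mmul nxi (mmul nxi (tr (Bt i)) P) (Bt i) a b) / real n) r c
        + mmul (2 * n + 2)
            (mmul (2 * n + 2) (tr (hcat nxi (mmul 1 (Dpsi1 L \<nu> \<gamma>) Ct) (Dpsi2 n)))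
               (kron 2 2 (block4 1 1 (\<lambda>_ _. lam1) zerom zerom (\<lambda>a b. lam2 / real n * idm n a b))
                         (\<lambda>a b. if a = b then 0 else 1)))
            (hcat nxi (mmul 1 (Dpsi1 L \<nu> \<gamma>) Ct) (Dpsi2 n)) r c)"
  shows "(\<forall>k\<ge>1. \<forall>xi0.
            Eidx n (Suc k) (\<lambda>\<sigma>. kquad nxi P (\<lambda>a. traj nxi n At Bt Ct G xi0 \<sigma> (Suc k) a - xis a))
            \<le> \<rho>^2 * Eidx n k (\<lambda>\<sigma>. kquad nxi P (\<lambda>a. traj nxi n At Bt Ct G xi0 \<sigma> k a - xis a)))
       \<and> (\<forall>k\<ge>1. \<forall>xi0.
            Eidx n k (\<lambda>\<sigma>. bnorm2 nxi (\<lambda>a. traj nxi n At Bt Ct G xi0 \<sigma> k a - xis a))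
            \<le> \<rho>^(2 * k) * cond nxi P * bnorm2 nxi (\<lambda>a. xi0 a - xis a))"
proof -
  let ?tr = "traj nxi n At Bt Ct G"
  define V where "V = (\<lambda>xi0 \<sigma> k. kquad nxi P (\<lambda>a. ?tr xi0 \<sigma> k a - xis a))"
  note OS = one_step[OF n_pos xis_fix xis_out sector_avg sector_i lam1_nn lam2_nn LMI]
  have step: "Eidx n (Suc k) (\<lambda>\<sigma>. V xi0 \<sigma> (Suc k)) \<le> \<rho>^2 * Eidx n k (\<lambda>\<sigma>. V xi0 \<sigma> k)" for k xi0
  proof -
    have "Eidx n (Suc k) (\<lambda>\<sigma>. V xi0 \<sigma> (Suc k)) = Eidx n k (\<lambda>f. (\<Sum>y<n. V xi0 (f(k:=y)) (Suc k)) / real n)"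
      by (rule Eidx_Suc[OF n_pos])
    also have "\<dots> \<le> Eidx n k (\<lambda>f. \<rho>^2 * V xi0 f k)"
    proof (rule Eidx_mono[OF n_pos])
      fix f :: "nat \<Rightarrow> nat"
      show "(\<Sum>y<n. V xi0 (f(k:=y)) (Suc k)) / real n \<le> \<rho>^2 * V xi0 f k"
        unfolding V_def traj_Suc_upd by (rule OS)
    qed
    also have "\<dots> = \<rho>^2 * Eidx n k (\<lambda>\<sigma>. V xi0 \<sigma> k)" by (rule Eidx_cmult)
    finally show ?thesis .
  qed
  have iter: "Eidx n k (\<lambda>\<sigma>. V xi0 \<sigma> k) \<le> (\<rho>^2)^k * V xi0 (\<lambda>_. 0) 0" for k xi0
  proof (induction k)
    case 0
    then show ?case by (simp add: Eidx_0)
  next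
    case (Suc k)
    have "Eidx n (Suc k) (\<lambda>\<sigma>. V xi0 \<sigma> (Suc k)) \<le> \<rho>^2 * Eidx n k (\<lambda>\<sigma>. V xi0 \<sigma> k)" by (rule step)
    also have "\<dots> \<le> \<rho>^2 * ((\<rho>^2)^k * V xi0 (\<lambda>_. 0) 0)"
      using Suc.IH by (intro mult_left_mono) auto
    finally show ?case by (simp add: mult_ac)
  qed
  obtain lmax lmin where sb: "cond nxi P = lmax / lmin" "lmin > 0"
      "\<forall>x. quad nxi P x \<le> lmax * nsq nxi x" "\<forall>x. lmin * nsq nxi x \<le> quad nxi P x"
    using spec_bounds[OF nxi_pos P_sym P_pd] by blast
  have up: "kquad nxi P \<xi> \<le> lmax * bnorm2 nxi \<xi>" for \<xi> :: "nat \<Rightarrow> real^'p"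
    unfolding kquad_coord bnorm2_coord sum_distrib_left using sb(3) by (intro sum_mono) blast
  have lo: "lmin * bnorm2 nxi \<xi> \<le> kquad nxi P \<xi>" for \<xi> :: "nat \<Rightarrow> real^'p"
    unfolding kquad_coord bnorm2_coord sum_distrib_left using sb(4) by (intro sum_mono) blast
  have part2: "Eidx n k (\<lambda>\<sigma>. bnorm2 nxi (\<lambda>a. ?tr xi0 \<sigma> k a - xis a))
            \<le> \<rho>^(2 * k) * cond nxi P * bnorm2 nxi (\<lambda>a. xi0 a - xis a)" for k xi0
  proof -
    have "Eidx n k (\<lambda>\<sigma>. bnorm2 nxi (\<lambda>a. ?tr xi0 \<sigma> k a - xis a)) \<le> Eidx n k (\<lambda>\<sigma>. V xi0 \<sigma> k / lmin)"
    proof (rule Eidx_mono[OF n_pos])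
      fix f :: "nat \<Rightarrow> nat"
      show "bnorm2 nxi (\<lambda>a. ?tr xi0 f k a - xis a) \<le> V xi0 f k / lmin"
        unfolding V_def using lo sb(2) by (simp add: pos_le_divide_eq mult.commute)
    qed
    also have "\<dots> = Eidx n k (\<lambda>\<sigma>. V xi0 \<sigma> k) / lmin" by (rule Eidx_div)
    also have "\<dots> \<le> (\<rho>^2)^k * V xi0 (\<lambda>_. 0) 0 / lmin"
      using iter sb(2) by (simp add: divide_right_mono)
    also have "\<dots> \<le> (\<rho>^2)^k * (lmax * bnorm2 nxi (\<lambda>a. xi0 a - xis a)) / lmin"
    proof -
      have "V xi0 (\<lambda>_. 0) 0 \<le> lmax * bnorm2 nxi (\<lambda>a. xi0 a - xis a)"
        unfolding V_def using up by simp
      then show ?thesis using sb(2) by (intro divide_right_mono mult_left_mono) auto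
    qed
    also have "\<dots> = \<rho>^(2 * k) * cond nxi P * bnorm2 nxi (\<lambda>a. xi0 a - xis a)"
      unfolding sb(1) by (simp add: power_mult)
    finally show ?thesis .
  qed
  show ?thesis
    using step part2 unfolding V_def by blast
qed


end
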